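(* Let $(X,\tau)$ be a point-separable topological vector space over $\mathbb{R}$. Then $X$ has the fixed point property: for every nonempty, compact, convex subset $C\subseteq X$ and every $\tau$-continuous mapping $f:C\to C$, there exists $x_0\in C$ with $f(x_0)=x_0$.
   Context: All vector spaces are real; $\theta$ denotes the origin of $X$ and $X^*$ denotes the space of linear $\tau$-continuous functionals on $X$. The space $(X,\tau)$ is called point-separable if there is a subset $V\subseteq X^*$ such that, for $x\in X$, $v(x)=0$ for every $v\in V$ implies $x=\theta$. *)

theory Defs
  imports "HOL-Analysis.Analysis"
begin

definition tvs :: "'a::real_vector topology \<Rightarrow> bool" where
  "tvs tau \<longleftrightarrow> topspace tau = UNIV
     \<and> continuous_map (prod_topology tau tau) tau (\<lambda>(x, y). x + y)
     \<and> continuous_map (prod_topology euclideanreal tau) tau (\<lambda>(a, x). a *\<^sub>R x)"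

definition dual_space :: "'a::real_vector topology \<Rightarrow> ('a \<Rightarrow> real) set" where
  "dual_space tau = {v. linear v \<and> continuous_map tau euclideanreal v}"

definition point_separable :: "'a::real_vector topology \<Rightarrow> bool" where
  "point_separable tau \<longleftrightarrow>
     (\<exists>V. V \<subseteq> dual_space tau \<and> (\<forall>x. (\<forall>v\<in>V. v x = 0) \<longrightarrow> x = 0))"

end

theory Submission
  imports Defs
begin

definition cube :: "nat \<Rightarrow> (nat\<Rightarrow>real) set" where
  "cube n = {x. (\<forall>i<n. 0 \<le> x i \<and> x i \<le> 1) \<and> (\<forall>i\<ge>n. x i = 0)}"

lemma cube_PiE: "cube n = PiE UNIV (\<lambda>i. if i<n then {0..1} else {0})"
  unfolding cube_def PiE_def Pi_def by (auto simp: not_less)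

lemma compact_cube: "compact (cube n)"
proof -
  have "compactin (product_topology (\<lambda>i. euclidean) UNIV) (cube n)"
    unfolding cube_PiE compactin_PiE by auto
  then show ?thesis by (simp add: euclidean_product_topology)
qed

lemma dist_fun_small:
  fixes x y :: "nat \<Rightarrow> real"
  assumes "\<And>i. \<bar>x i - y i\<bar> \<le> c" "0 \<le> c"
  shows "dist x y \<le> 2 * c + (1/2)^N"
proof -
  have "dist x y \<le> 2 * Max {dist (x (from_nat k)) (y (from_nat k))|k. k \<le> N} + (1/2)^N"
    by (rule dist_fun_le_dist_first_terms)
  moreover have "Max {dist (x (from_nat k)) (y (from_nat k))|k. k \<le> N} \<le> c"
  proof (subst Max_le_iff)
    show "finite {dist (x (from_nat k)) (y (from_nat k))|k. k \<le> N}" by simp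
    show "{dist (x (from_nat k)) (y (from_nat k))|k. k \<le> N} \<noteq> {}" by auto
    show "\<forall>a\<in>{dist (x (from_nat k)) (y (from_nat k)) |k. k \<le> N}. a \<le> c"
      using assms by (auto simp: dist_real_def)
  qed
  ultimately show ?thesis by linarith
qed

lemma brouwer_cube_nat:
  assumes cont: "continuous_on (cube n) G" and im: "G ` cube n \<subseteq> cube n"
  shows "\<exists>x\<in>cube n. G x = x"
proof (rule ccontr)
  assume nf: "\<not> ?thesis"
  define \<G> where "\<G> = {W. open W \<and> (\<exists>i<n. (\<forall>y\<in>W \<inter> cube n. y i < G y i) \<or> (\<forall>y\<in>W \<inter> cube n. G y i < y i))}"
  have cov: "cube n \<subseteq> \<Union>\<G>"
  proof
    fix z assume z: "z \<in> cube n"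
    then have "G z \<noteq> z" using nf by auto
    then obtain i where gi: "G z i \<noteq> z i" by auto
    have Gz: "G z \<in> cube n" using im z by auto
    have "i < n"
    proof (rule ccontr)
      assume "\<not> i < n"
      then show False using Gz z gi by (auto simp: cube_def)
    qed
    have c1: "continuous_on (cube n) (\<lambda>y. G y i)"
      by (rule continuous_on_product_then_coordinatewise[OF cont])
    have c2: "continuous_on (cube n) (\<lambda>y. y i)"
      by (rule continuous_on_subset[OF continuous_on_product_coordinates]) simp
    have ci: "continuous_on (cube n) (\<lambda>y. G y i - y i)"
      by (rule continuous_on_diff[OF c1 c2])
    show "z \<in> \<Union>\<G>"
    proof (cases "z i < G z i")
      case True
      obtain A where A: "open A" "A \<inter> cube n = (\<lambda>y. G y i - y i) -` {0<..} \<inter> cube n"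
        using ci unfolding continuous_on_open_invariant by (meson open_greaterThan)
      have "A \<in> \<G>" unfolding \<G>_def using A \<open>i<n\<close> by (intro CollectI conjI exI[of _ i]) auto
      moreover have "z \<in> A" using A(2) z True by auto
      ultimately show ?thesis by blast
    next
      case False
      then have F: "G z i < z i" using gi by auto
      obtain A where A: "open A" "A \<inter> cube n = (\<lambda>y. G y i - y i) -` {..<0} \<inter> cube n"
        using ci unfolding continuous_on_open_invariant by (meson open_lessThan)
      have "A \<in> \<G>" unfolding \<G>_def using A \<open>i<n\<close> by (intro CollectI conjI exI[of _ i]) auto
      moreover have "z \<in> A" using A(2) z F by auto
      ultimately show ?thesis by blast
    qed
  qed
  obtain e where e: "0<e" "\<And>x. x\<in>cube n \<Longrightarrow> \<exists>W\<in>\<G>. ball x e \<subseteq> W"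
    using Heine_Borel_lemma[OF compact_cube cov] \<G>_def by blast
  obtain N where N: "(1/2::real)^N < e/2"
    using real_arch_pow_inv[of "e/2" "1/2::real"] e by auto
  obtain p :: nat where p: "4/e < real p"
    using reals_Archimedean2 by blast
  have "0 < 4/e" using e by simp
  then have rp0: "0 < real p" using p by linarith
  then have p0: "0 < p" by simp
  have "4 < real p * e" using p e by (simp add: field_simps)
  then have pe: "2 * (1 / real p) < e/2" using rp0 by (simp add: field_simps)
  define l where "l x i = (if x i = 0 then 0 else if x i = 1 then 1 else if x i \<le> G x i then 0 else (1::nat))" for x i
  define gp where "gp k = (\<lambda>j. if j<n then real (k j)/real p else 0)" for k :: "nat\<Rightarrow>nat"
  have gp_cube: "gp k \<in> cube n" if "\<forall>i<n. k i \<le> p" for k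
    using that p0 by (auto simp: gp_def cube_def)
  have lab0: "l y i = 0" if "y \<in> cube n" "i<n" "y i < G y i" for y i
  proof -
    have "G y \<in> cube n" using im that by auto
    then have "G y i \<le> 1" using that by (auto simp: cube_def)
    then show ?thesis using that by (auto simp: l_def)
  qed
  have lab1: "l y i = 1" if "y \<in> cube n" "i<n" "G y i < y i" for y i
  proof -
    have "G y \<in> cube n" using im that by auto
    then have "0 \<le> G y i" using that by (auto simp: cube_def)
    then show ?thesis using that by (auto simp: l_def)
  qed
  have k1: "\<forall>x. (\<forall>i<n. x i \<le> p) \<longrightarrow> (\<forall>i<n. l (gp x) i = (0::nat) \<or> l (gp x) i = 1)"
    by (auto simp: l_def)
  have k2: "\<forall>x. (\<forall>i<n. x i \<le> p) \<longrightarrow> (\<forall>i<n. x i = 0 \<longrightarrow> l (gp x) i = 0)"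
    by (auto simp: l_def gp_def)
  have k3: "\<forall>x. (\<forall>i<n. x i \<le> p) \<longrightarrow> (\<forall>i<n. x i = p \<longrightarrow> l (gp x) i = 1)"
    using p0 by (auto simp: l_def gp_def)
  obtain q where q: "\<forall>i<n. q i < p"
    "\<forall>i<n. \<exists>r s. (\<forall>j<n. q j \<le> r j \<and> r j \<le> q j + 1) \<and> (\<forall>j<n. q j \<le> s j \<and> s j \<le> q j + 1) \<and> l (gp r) i \<noteq> l (gp s) i"
    using kuhn_lemma[OF p0 k1 k2 k3] by blast
  have zq: "gp q \<in> cube n" using q(1) by (intro gp_cube) (auto simp: less_imp_le)
  obtain W where O: "W \<in> \<G>" "ball (gp q) e \<subseteq> W" using e(2)[OF zq] by blast
  obtain i where i: "i < n" "(\<forall>y\<in>W \<inter> cube n. y i < G y i) \<or> (\<forall>y\<in>W \<inter> cube n. G y i < y i)"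
    using O(1) unfolding \<G>_def by blast
  obtain r s where rs: "\<forall>j<n. q j \<le> r j \<and> r j \<le> q j + 1" "\<forall>j<n. q j \<le> s j \<and> s j \<le> q j + 1"
    "l (gp r) i \<noteq> l (gp s) i"
    using q(2) i(1) by blast
  have near: "gp t \<in> W \<inter> cube n" if t: "\<forall>j<n. q j \<le> t j \<and> t j \<le> q j + 1" for t
  proof -
    have "\<forall>j<n. t j \<le> p"
    proof (intro allI impI)
      fix j assume "j < n"
      then have "t j \<le> q j + 1" "q j < p" using t q(1) by auto
      then show "t j \<le> p" by linarith
    qed
    then have tc: "gp t \<in> cube n" by (rule gp_cube)
    have "\<bar>gp q j - gp t j\<bar> \<le> 1 / real p" for j
    proof (cases "j < n")
      case True
      then have "real (q j) \<le> real (t j)" "real (t j) \<le> real (q j) + 1" using t by auto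
      then have a: "\<bar>real (q j) - real (t j)\<bar> \<le> 1" by linarith
      have "gp q j - gp t j = (real (q j) - real (t j)) / real p"
        using True by (simp add: gp_def diff_divide_distrib)
      then have "\<bar>gp q j - gp t j\<bar> = \<bar>real (q j) - real (t j)\<bar> / real p"
        by (simp add: abs_divide)
      also have "\<dots> \<le> 1 / real p" using a rp0 by (intro divide_right_mono) auto
      finally show ?thesis .
    qed (simp add: gp_def)
    then have "dist (gp q) (gp t) \<le> 2 * (1/real p) + (1/2)^N"
      by (intro dist_fun_small) auto
    then have "gp t \<in> ball (gp q) e" using pe N by simp
    then show ?thesis using O(2) tc by blast
  qed
  have nr: "gp r \<in> W \<inter> cube n" and ns: "gp s \<in> W \<inter> cube n"
    using near[OF rs(1)] near[OF rs(2)] by auto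
  have "l (gp r) i = l (gp s) i"
    using i(2)
  proof
    assume H: "\<forall>y\<in>W \<inter> cube n. y i < G y i"
    show ?thesis using lab0[OF _ i(1) H[rule_format, OF nr]] lab0[OF _ i(1) H[rule_format, OF ns]] nr ns by simp
  next
    assume H: "\<forall>y\<in>W \<inter> cube n. G y i < y i"
    show ?thesis using lab1[OF _ i(1) H[rule_format, OF nr]] lab1[OF _ i(1) H[rule_format, OF ns]] nr ns by simp
  qed
  then show False using rs(3) by simp
qed

lemma tvs_add:
  assumes "tvs tau" "continuous_map X tau g" "continuous_map X tau h"
  shows "continuous_map X tau (\<lambda>x. g x + h x)"
proof -
  have "continuous_map X (prod_topology tau tau) (\<lambda>x. (g x, h x))"
    using assms(2,3) by (rule continuous_map_pairedI)
  moreover have "continuous_map (prod_topology tau tau) tau (\<lambda>(x, y). x + y)"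
    using assms(1) by (simp add: tvs_def)
  ultimately have "continuous_map X tau ((\<lambda>(x, y). x + y) \<circ> (\<lambda>x. (g x, h x)))"
    by (rule continuous_map_compose)
  then show ?thesis by (simp add: o_def)
qed

lemma tvs_scale:
  assumes "tvs tau" "continuous_map X euclideanreal a" "continuous_map X tau g"
  shows "continuous_map X tau (\<lambda>x. a x *\<^sub>R g x)"
proof -
  have "continuous_map X (prod_topology euclideanreal tau) (\<lambda>x. (a x, g x))"
    using assms(2,3) by (rule continuous_map_pairedI)
  moreover have "continuous_map (prod_topology euclideanreal tau) tau (\<lambda>(a, x). a *\<^sub>R x)"
    using assms(1) by (simp add: tvs_def)
  ultimately have "continuous_map X tau ((\<lambda>(a, x). a *\<^sub>R x) \<circ> (\<lambda>x. (a x, g x)))"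
    by (rule continuous_map_compose)
  then show ?thesis by (simp add: o_def)
qed

lemma tvs_sum:
  fixes m :: nat
  assumes "tvs tau" "\<And>j. j < m \<Longrightarrow> continuous_map X euclideanreal (a j)"
  shows "continuous_map X tau (\<lambda>x. \<Sum>j<m. a j x *\<^sub>R z j)"
  using assms(2)
proof (induction m)
  case 0
  have "topspace tau = UNIV" using assms(1) by (simp add: tvs_def)
  then show ?case by simp
next
  case (Suc m)
  have c: "continuous_map X tau (\<lambda>x. z m)"
    using assms(1) by (simp add: tvs_def)
  have "continuous_map X tau (\<lambda>x. (\<Sum>j<m. a j x *\<^sub>R z j) + a m x *\<^sub>R z m)"
    using Suc by (intro tvs_add[OF assms(1)] tvs_scale[OF assms(1) _ c]) auto
  then show ?case by simp
qed

lemma compact_space_indexed_cover: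
  assumes "compact_space X" "\<And>i. i\<in>I \<Longrightarrow> openin X (U i)" "topspace X \<subseteq> (\<Union>i\<in>I. U i)"
  obtains F where "F \<subseteq> I" "finite F" "topspace X \<subseteq> (\<Union>i\<in>F. U i)"
proof -
  have "compactin X (topspace X)" using assms(1) by (simp add: compact_space_def)
  then obtain G where G: "finite G" "G \<subseteq> U ` I" "topspace X \<subseteq> \<Union>G"
    unfolding compactin_def using assms(2,3) by (metis (no_types, lifting) imageE)
  then obtain F where "F \<subseteq> I" "finite F" "G = U ` F"
    using finite_subset_image by metis
  then show ?thesis using that G by blast
qed

theorem theorem4p3:
  fixes tau :: "'a::real_vector topology"
  assumes "tvs tau" and "point_separable tau"
  shows "\<forall>C f. C \<noteq> {} \<and> compactin tau C \<and> convex C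
            \<and> f ` C \<subseteq> C \<and> continuous_map (subtopology tau C) tau f
          \<longrightarrow> (\<exists>x0\<in>C. f x0 = x0)"
proof (intro allI impI)
  fix C and f :: "'a \<Rightarrow> 'a"
  assume H: "C \<noteq> {} \<and> compactin tau C \<and> convex C \<and> f ` C \<subseteq> C \<and> continuous_map (subtopology tau C) tau f"
  then have Cne: "C \<noteq> {}" and Ccp: "compactin tau C" and Ccv: "convex C" and fim: "f ` C \<subseteq> C"
    and fc: "continuous_map (subtopology tau C) tau f" by auto
  have top: "topspace tau = UNIV" using assms(1) by (simp add: tvs_def)
  have topC: "topspace (subtopology tau C) = C" using top by simp
  have csC: "compact_space (subtopology tau C)" using Ccp by (simp add: compactin_subspace)
  have fC: "continuous_map (subtopology tau C) (subtopology tau C) f"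
    using fc fim topC by (intro continuous_map_into_subtopology) auto
  show "\<exists>x0\<in>C. f x0 = x0"
  proof (rule ccontr)
    assume nf: "\<not> (\<exists>x0\<in>C. f x0 = x0)"
    obtain V where V: "V \<subseteq> dual_space tau" "\<forall>x. (\<forall>v\<in>V. v x = 0) \<longrightarrow> x = 0"
      using assms(2) by (auto simp: point_separable_def)
    have vlin: "linear v" if "v \<in> V" for v using V(1) that by (auto simp: dual_space_def)
    have vcont: "continuous_map tau euclideanreal v" if "v \<in> V" for v
      using V(1) that by (auto simp: dual_space_def)
    define W where "W = (\<lambda>(v, k::nat). {y \<in> topspace (subtopology tau C). inverse (real (Suc k)) < \<bar>v y - v (f y)\<bar>})"
    have Wopen: "openin (subtopology tau C) (W vk)" if vkV: "vk \<in> V \<times> UNIV" for vk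
    proof -
      obtain v k where vk: "vk = (v, k)" "v \<in> V" using vkV by (cases vk) auto
      have "continuous_map (subtopology tau C) euclideanreal (\<lambda>y. \<bar>v y - v (f y)\<bar>)"
      proof -
        have c1: "continuous_map (subtopology tau C) euclideanreal v"
          using vcont[OF vk(2)] by (rule continuous_map_from_subtopology)
        have "continuous_map (subtopology tau C) euclideanreal (v \<circ> f)"
          using fc vcont[OF vk(2)] by (rule continuous_map_compose)
        then have c2: "continuous_map (subtopology tau C) euclideanreal (\<lambda>y. v (f y))" by (simp add: o_def)
        show ?thesis by (intro continuous_map_real_abs continuous_map_diff c1 c2)
      qed
      then have "openin (subtopology tau C) {y \<in> topspace (subtopology tau C). \<bar>v y - v (f y)\<bar> \<in> {inverse (real (Suc k))<..}}"
        by (rule openin_continuous_map_preimage) simp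
      then show ?thesis by (simp add: W_def vk)
    qed
    have Wcov: "topspace (subtopology tau C) \<subseteq> (\<Union>vk\<in>V \<times> UNIV. W vk)"
    proof
      fix y assume y: "y \<in> topspace (subtopology tau C)"
      then have yC: "y \<in> C" using topC by simp
      then have "y - f y \<noteq> 0" using nf by auto
      then obtain v where v: "v \<in> V" "v (y - f y) \<noteq> 0" using V(2) by blast
      then have "0 < \<bar>v y - v (f y)\<bar>" using vlin[OF v(1)] by (simp add: real_vector.linear_diff)
      then obtain k where "inverse (real (Suc k)) < \<bar>v y - v (f y)\<bar>"
        using reals_Archimedean by blast
      then have "y \<in> W (v, k)" using y by (simp add: W_def)
      then show "y \<in> (\<Union>vk\<in>V \<times> UNIV. W vk)" using v(1) by blast
    qed
    obtain F where F: "F \<subseteq> V \<times> UNIV" "finite F" "topspace (subtopology tau C) \<subseteq> (\<Union>vk\<in>F. W vk)"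
      using compact_space_indexed_cover[OF csC Wopen Wcov] by blast
    have Fne: "F \<noteq> {}" using F(3) Cne topC by auto
    define Vs where "Vs = fst ` F"
    define K where "K = Max (snd ` F)"
    define \<epsilon> where "\<epsilon> = inverse (real (Suc K))"
    have eps0: "0 < \<epsilon>" by (simp add: \<epsilon>_def)
    have Vs: "finite Vs" "Vs \<subseteq> V" using F(1,2) unfolding Vs_def by auto
    define \<rho> where "\<rho> a b = (\<Sum>v\<in>Vs. \<bar>v a - v b\<bar>)" for a b
    have rho_sym: "\<rho> a b = \<rho> b a" for a b by (simp add: \<rho>_def abs_minus_commute)
    have rho_big: "\<epsilon> < \<rho> y (f y)" if yC: "y \<in> C" for y
    proof -
      have "y \<in> (\<Union>vk\<in>F. W vk)" using F(3) yC topC by blast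
      then obtain vk where vk0: "vk \<in> F" "y \<in> W vk" by blast
      obtain v k where vkeq: "vk = (v, k)" by (cases vk)
      have vF: "(v, k) \<in> F" and yW: "y \<in> W (v, k)" using vk0 vkeq by auto
      have "k \<in> snd ` F" using vF by force
      then have "k \<le> K" unfolding K_def using F(2) by (intro Max_ge) auto
      then have "\<epsilon> \<le> inverse (real (Suc k))" by (simp add: \<epsilon>_def)
      also have "\<dots> < \<bar>v y - v (f y)\<bar>" using yW by (simp add: W_def)
      also have "\<dots> \<le> \<rho> y (f y)"
      proof -
        have "v \<in> Vs" using vF unfolding Vs_def by force
        then show ?thesis unfolding \<rho>_def using Vs(1) by (intro member_le_sum) auto
      qed
      finally show ?thesis .
    qed
    have rho_cont: "continuous_map tau euclideanreal (\<lambda>y. \<rho> y z)" for z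
      unfolding \<rho>_def using Vs vcont
      by (intro continuous_map_sum continuous_map_real_abs continuous_map_diff) auto
    define N where "N z = {y \<in> topspace (subtopology tau C). \<rho> y z \<in> {..<\<epsilon>}}" for z
    have Nopen: "openin (subtopology tau C) (N z)" for z
      unfolding N_def
      by (rule openin_continuous_map_preimage[OF continuous_map_from_subtopology[OF rho_cont]]) simp
    have Ncov: "topspace (subtopology tau C) \<subseteq> (\<Union>z\<in>C. N z)"
      using eps0 topC by (auto simp: N_def \<rho>_def)
    obtain Z where Z: "Z \<subseteq> C" "finite Z" "topspace (subtopology tau C) \<subseteq> (\<Union>z\<in>Z. N z)"
      using compact_space_indexed_cover[OF csC Nopen Ncov] by blast
    obtain m :: nat and zs where zs: "Z = zs ` {i. i < m}"
      using finite_imp_nat_seg_image_inj_on[OF Z(2)] by blast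
    have m0: "0 < m" using Z(3) zs Cne topC by (auto simp: N_def)
    have zsC: "zs j \<in> C" if "j < m" for j using zs Z(1) that by auto
    have near_some: "\<exists>j<m. \<rho> y (zs j) < \<epsilon>" if "y \<in> C" for y
      using Z(3) zs that topC by (auto simp: N_def)
    define \<psi> where "\<psi> j y = max 0 (\<epsilon> - \<rho> y (zs j))" for j y
    define S where "S y = (\<Sum>j<m. \<psi> j y)" for y
    define \<phi> where "\<phi> j y = \<psi> j y / S y" for j y
    have psi0: "0 \<le> \<psi> j y" for j y by (simp add: \<psi>_def)
    have S0: "0 < S y" if yC: "y \<in> C" for y
    proof -
      obtain j where j: "j < m" "\<rho> y (zs j) < \<epsilon>" using near_some[OF yC] by blast
      have "0 < \<psi> j y" using j by (simp add: \<psi>_def)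
      also have "\<dots> \<le> S y" unfolding S_def using j psi0 by (intro member_le_sum) auto
      finally show ?thesis .
    qed
    have phi_sum: "(\<Sum>j<m. \<phi> j y) = 1" if "y \<in> C" for y
      using S0[OF that] by (simp add: \<phi>_def S_def sum_divide_distrib[symmetric])
    have phi0: "0 \<le> \<phi> j y" if "y \<in> C" for j y
      using S0[OF that] psi0 by (simp add: \<phi>_def)
    have phi1: "\<phi> j y \<le> 1" if "y \<in> C" "j < m" for j y
    proof -
      have "\<psi> j y \<le> S y" unfolding S_def using that psi0 by (intro member_le_sum) auto
      then show ?thesis using S0[OF that(1)] by (simp add: \<phi>_def)
    qed
    have phi_cont: "continuous_map (subtopology tau C) euclideanreal (\<phi> j)" for j
    proof -
      have cpsi: "continuous_map (subtopology tau C) euclideanreal (\<psi> i)" for i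
        unfolding \<psi>_def
        by (intro continuous_map_real_max continuous_map_diff continuous_map_from_subtopology[OF rho_cont]) simp_all
      have cS: "continuous_map (subtopology tau C) euclideanreal S"
        unfolding S_def by (intro continuous_map_sum cpsi) auto
      show ?thesis unfolding \<phi>_def[abs_def]
      proof (intro continuous_map_real_divide cpsi cS)
        fix y assume "y \<in> topspace (subtopology tau C)"
        then have "0 < S y" using S0 topC by simp
        then show "S y \<noteq> 0" by simp
      qed
    qed
    define s where "s q = (\<Sum>k<m. q k)" for q :: "nat \<Rightarrow> real"
    define a where "a q = \<bar>1 - s q\<bar>" for q
    define D where "D q = s q + real m * a q" for q
    define w where "w j q = (q j + a q) / D q" for j q
    define B where "B q = (\<Sum>j<m. w j q *\<^sub>R zs j)" for q
    define G where "G q = (\<lambda>j. if j < m then \<phi> j (f (B q)) else 0)" for q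
    have s0: "0 \<le> s q" if "q \<in> cube m" for q
      using that unfolding s_def cube_def by (intro sum_nonneg) auto
    have D0: "0 < D q" if "q \<in> cube m" for q
    proof (cases "s q = 0")
      case True
      then show ?thesis using m0 by (simp add: D_def a_def)
    next
      case False
      then have "0 < s q" using s0[OF that] by simp
      moreover have "0 \<le> real m * a q" by (simp add: a_def)
      ultimately show ?thesis by (simp add: D_def)
    qed
    have w0: "0 \<le> w j q" if "q \<in> cube m" "j < m" for j q
      using that D0[OF that(1)] by (auto simp: w_def a_def cube_def)
    have wsum: "(\<Sum>j<m. w j q) = 1" if "q \<in> cube m" for q
    proof -
      have "(\<Sum>j<m. w j q) = (\<Sum>j<m. q j + a q) / D q"
        by (simp add: w_def sum_divide_distrib)
      also have "(\<Sum>j<m. q j + a q) = D q" by (simp add: sum.distrib D_def s_def)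
      finally show ?thesis using D0[OF that] by simp
    qed
    have BC: "B q \<in> C" if "q \<in> cube m" for q
      unfolding B_def using that wsum w0 zsC by (intro convex_sum[OF finite_lessThan Ccv]) auto
    have cq: "continuous_on (cube m) (\<lambda>q. q k)" for k
      by (rule continuous_on_subset[OF continuous_on_product_coordinates]) simp
    have cs: "continuous_on (cube m) s"
      unfolding s_def[abs_def] by (intro continuous_on_sum cq)
    have ca: "continuous_on (cube m) a"
      unfolding a_def[abs_def] by (intro continuous_on_rabs continuous_on_diff continuous_on_const cs)
    have cD: "continuous_on (cube m) D"
      unfolding D_def[abs_def] by (intro continuous_on_add continuous_on_mult continuous_on_const cs ca)
    have wcont: "continuous_on (cube m) (w j)" for j
      unfolding w_def[abs_def]
      by (intro continuous_on_divide continuous_on_add cq ca cD) (use D0 in force)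
    have Bcont: "continuous_map (top_of_set (cube m)) (subtopology tau C) B"
    proof (rule continuous_map_into_subtopology)
      show "continuous_map (top_of_set (cube m)) tau B"
        unfolding B_def[abs_def] using wcont by (intro tvs_sum[OF assms(1)]) simp
      show "B \<in> topspace (top_of_set (cube m)) \<rightarrow> C" using BC by auto
    qed
    have Gcoord: "continuous_on (cube m) (\<lambda>q. G q j)" for j
    proof (cases "j < m")
      case True
      have "continuous_map (top_of_set (cube m)) euclideanreal (\<phi> j \<circ> (f \<circ> B))"
        using continuous_map_compose[OF continuous_map_compose[OF Bcont fC] phi_cont] .
      then show ?thesis using True by (simp add: G_def o_def)
    next
      case False
      then show ?thesis by (simp add: G_def)
    qed
    have Gcont: "continuous_on (cube m) G"
      by (rule continuous_on_coordinatewise_then_product) (rule Gcoord)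
    have Gim: "G ` cube m \<subseteq> cube m"
    proof
      fix u assume "u \<in> G ` cube m"
      then obtain q where q: "q \<in> cube m" "u = G q" by blast
      have "f (B q) \<in> C" using BC[OF q(1)] fim by auto
      then show "u \<in> cube m" using q phi0 phi1 by (auto simp: cube_def G_def)
    qed
    obtain q where q: "q \<in> cube m" "G q = q"
      using brouwer_cube_nat[OF Gcont Gim] by blast
    define x where "x = B q"
    define y where "y = f x"
    have xC: "x \<in> C" using BC[OF q(1)] by (simp add: x_def)
    have yC: "y \<in> C" using xC fim by (auto simp: y_def)
    have qj: "q j = \<phi> j y" if "j < m" for j
      using fun_cong[OF q(2), of j] that by (simp add: G_def y_def x_def)
    have sq: "s q = 1" unfolding s_def using qj phi_sum[OF yC] by simp
    have wq: "w j q = \<phi> j y" if "j < m" for j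
      using sq qj[OF that] by (simp add: w_def a_def D_def)
    have xeq: "x = (\<Sum>j<m. \<phi> j y *\<^sub>R zs j)"
      unfolding x_def B_def using wq by simp
    have trm: "\<bar>v x - v y\<bar> \<le> (\<Sum>j<m. \<phi> j y * \<bar>v (zs j) - v y\<bar>)" if "v \<in> Vs" for v
    proof -
      have lv: "linear v" using vlin Vs(2) that by auto
      have vx: "v x = (\<Sum>j<m. \<phi> j y * v (zs j))"
        unfolding xeq using lv by (simp add: real_vector.linear_sum linear_cmul)
      have vy: "v y = (\<Sum>j<m. \<phi> j y * v y)"
        using phi_sum[OF yC] by (simp add: sum_distrib_right[symmetric])
      have "v x - v y = (\<Sum>j<m. \<phi> j y * (v (zs j) - v y))"
        by (subst vx, subst vy) (simp add: sum_subtractf[symmetric] right_diff_distrib)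
      then have "\<bar>v x - v y\<bar> \<le> (\<Sum>j<m. \<bar>\<phi> j y * (v (zs j) - v y)\<bar>)"
        by (simp add: sum_abs)
      also have "\<dots> = (\<Sum>j<m. \<phi> j y * \<bar>v (zs j) - v y\<bar>)"
        using phi0[OF yC] by (simp add: abs_mult)
      finally show ?thesis .
    qed
    have "\<rho> x y \<le> (\<Sum>v\<in>Vs. \<Sum>j<m. \<phi> j y * \<bar>v (zs j) - v y\<bar>)"
      unfolding \<rho>_def by (rule sum_mono) (rule trm)
    also have "\<dots> = (\<Sum>j<m. \<phi> j y * \<rho> (zs j) y)"
      unfolding \<rho>_def by (simp add: sum.swap[of _ Vs] sum_distrib_left)
    also have "\<dots> \<le> (\<Sum>j<m. \<phi> j y * \<epsilon>)"
    proof (rule sum_mono)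
      fix j assume j: "j \<in> {..<m}"
      show "\<phi> j y * \<rho> (zs j) y \<le> \<phi> j y * \<epsilon>"
      proof (cases "\<phi> j y = 0")
        case False
        then have "\<psi> j y \<noteq> 0" by (simp add: \<phi>_def)
        then have "\<rho> y (zs j) < \<epsilon>" by (simp add: \<psi>_def max_def split: if_splits)
        then have "\<rho> (zs j) y \<le> \<epsilon>" using rho_sym by simp
        then show ?thesis using phi0[OF yC] by (intro mult_left_mono) auto
      qed simp
    qed
    also have "\<dots> = \<epsilon>" using phi_sum[OF yC] by (simp add: sum_distrib_right[symmetric])
    finally have "\<rho> x y \<le> \<epsilon>" .
    moreover have "\<epsilon> < \<rho> x y" using rho_big[OF xC] by (simp add: y_def)
    ultimately show False by simp
  qed
qed

end
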